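(* Let $g$ be the contravariant metric associated with an admissible data set and, for each vertex $\alpha$, let $K^\alpha(t_\alpha)$ be the family of Killing tensors defined by $K^\alpha(t_\alpha)(\xi,\eta)=g(S^\alpha(t_\alpha)\xi,\eta)$ with $S^\alpha(t_\alpha)$ as below; it is a polynomial of degree $n_\alpha-1$ in $t_\alpha$. For $j=1,\dots,n_\alpha$ let $I^\alpha_j$ be the quadratic function on $T^*M$ given by $p\mapsto (K^\alpha_j)^{ab}p_ap_b$, where $K^\alpha_j$ is the coefficient of $t_\alpha^{\,n_\alpha-j}$ in $K^\alpha(t_\alpha)$ and indices are raised with $g$. Order the $n$ integrals as $I=(I^1_1,\dots,I^1_{n_1},I^2_1,\dots,I^2_{n_2},\dots,I^B_{n_B})^\top$ and the momenta as $P=(p_{x_1^1}^2,\dots,p_{x_1^{n_1}}^2,\dots,p_{x_B^{n_B}}^2)^\top$. Let $S$ be the $n\times n$ matrix whose rows are indexed by the coordinates $x_\beta^i$ and whose columns are indexed by the integrals $I^\alpha_j$, with entries - $S_{(\alpha,i),(\alpha,j)}=\dfrac{(x_\alpha^i)^{n_\alpha-j}}{P_\alpha(x_\alpha^i)}$; - if $\beta=\operatorname{next}(\alpha)$: $S_{(\beta,i),(\alpha,1)}=\dfrac{1}{P_\beta(x_\beta^i)\,(x_\beta^i-\lambda_\alpha)}$ and $S_{(\beta,i),(\alpha,j)}=0$ for $j\ge2$; - $S_{(\beta,i),(\alpha,j)}=0$ whenever $\beta\ne\alpha$ and $\beta\neq\operatorname{next}(\alpha)$. Then $S\,I=P$ (so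 $S$ is a Stäckel matrix: its row indexed by $x_\beta^i$ depends only on $x_\beta^i$). Here $S^\alpha(t_\alpha)$ is block-diagonal w.r.t. $(X_1,\dots,X_B)$ with $\alpha$-block $f_\alpha^{-1}(t_\alpha\operatorname{Id}-L_\alpha)^{-1}\det(t_\alpha\operatorname{Id}-L_\alpha)$, with $\beta$-block $\Phi^{\alpha\beta}(t_\alpha)\operatorname{Id}_{n_\beta}$ for $\alpha\prec\beta$, where $\Phi^{\alpha\beta}(t_\alpha)=\frac{1}{f_\alpha(t_\alpha-\lambda_\gamma)}\bigl(\det(t_\alpha\operatorname{Id}-L_\alpha)-\det(\lambda_\gamma\operatorname{Id}-L_\alpha)\bigr)$ with $\gamma$ the vertex preceding $\alpha$ on the oriented path from $\beta$ to $\alpha$, and all other blocks zero.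
   Context: Admissible data. Fix $n\ge1$. An admissible data set consists of: a natural number $B\le n$; natural numbers $n_1,\dots,n_B$ with $n_1+\dots+n_B=n$; an in-directed rooted forest $\mathsf F$ with vertex set $\{1,\dots,B\}$, i.e. a directed graph each of whose connected components is a rooted tree with all edges oriented towards its root (so every vertex has a unique oriented path to a root); for an edge from $\beta$ to $\alpha$ we write $\alpha=\operatorname{next}(\beta)$, and for $\alpha\neq\beta$ we write $\alpha\prec\beta$ if there is an oriented path from $\beta$ to $\alpha$; every non-root vertex $\beta$ (equivalently, every edge $\beta\to\operatorname{next}(\beta)$) carries a number $\lambda_\beta$; every vertex $\alpha$ carries a polynomial $P_\alpha(t)=a^\alpha_0+a^\alpha_1t+\dots+a^\alpha_{n_\alpha+1}t^{n_\alpha+1}$ of degree at most $n_\alpha+1$. These are required to satisfy: (i) if $\mathsf F$ has more than one connected component, then $a^\alpha_{n_\alpha+1}=0$ for every root $\alpha$; (ii) if $\alpha=\operatorname{next}(\beta)$, then $P_\alpha(\lambda_\beta)=0$ and $a^\beta_{n_\beta+1}=P_\alpha'(\lambda_\beta)$; (iii) if $\beta\neq\gamma$ satisfy $\operatorname{next}(\beta)=\operatorname{next}(\gamma)=\alpha$ and $\lambda_\beta=\lambda_\gamma=\lambda$, then $\lambda$ is a root of $P_\alpha$ of multiplicity at least $2$. Associated metric. Divide the coordinates $(x^1,\dots,x^n)$ into consecutive blocks $X_\alpha=(x_\alpha^1,\dots,x_\alpha^{n_\alpha})$, $\alpha=1,\dots,B$. Let $L_\alpha=\operatorname{diag}(x_\alpha^1,\dots,x_\alpha^{n_\alpha})$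 (an $n_\alpha\times n_\alpha$ operator), let $g^{\mathsf{LC}}_\alpha=\sum_{s=1}^{n_\alpha}\bigl(\prod_{j\neq s}(x_\alpha^s-x_\alpha^j)\bigr)^{-1}\bigl(\partial/\partial x_\alpha^s\bigr)^2$ (a contravariant metric on the block), and let $f_\alpha=\prod_{s}\det\bigl(\lambda_s\operatorname{Id}-L_{\operatorname{next}(s)}\bigr)^{-1}$, the product over all non-root vertices $s$ with $s\prec\alpha$ or $s=\alpha$ (so $f_\alpha=1$ if $\alpha$ is a root). The associated contravariant metric is the diagonal metric $g=\operatorname{diag}(g_1,\dots,g_B)$ with $g_\alpha=f_\alpha\,P_\alpha(L_\alpha)\,g^{\mathsf{LC}}_\alpha$, i.e. $g^{ii}$ for the coordinate $x_\alpha^s$ equals $f_\alpha P_\alpha(x_\alpha^s)/\prod_{j\ne s}(x_\alpha^s-x_\alpha^j)$. It is considered on an open set where all these quantities are defined and nonzero. Coordinates are allowed to be real or to come in complex-conjugate pairs. *)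

theory Defs
  imports Complex_Main "HOL-Computational_Algebra.Polynomial"
begin

text \<open>The forest is given by a partial map
  nxt: nxt b = Some a means there is an edge b -> a (a = next(b)); nxt b = None
  means b is a root.  Coordinates of block a are x a 1, ..., x a (nb a),
  momenta p a s is the momentum conjugate to x a s.  Everything is complex
  (covering real coordinates and complex-conjugate pairs).\<close>

definition fedges :: "nat \<Rightarrow> (nat \<Rightarrow> nat option) \<Rightarrow> (nat \<times> nat) set" where
  "fedges B nxt = {(b, a). b \<in> {1..B} \<and> nxt b = Some a}"

text \<open>prec B nxt a b  means  a \<prec> b: there is an oriented path from b to a.\<close>
definition prec :: "nat \<Rightarrow> (nat \<Rightarrow> nat option) \<Rightarrow> nat \<Rightarrow> nat \<Rightarrow> bool" where
  "prec B nxt a b \<longleftrightarrow> (b, a) \<in> (fedges B nxt)\<^sup>+"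

text \<open>In-directed rooted forest on {1..B}: edges stay inside the vertex set and
  there are no cycles (so every vertex has a unique oriented path to a root).\<close>
definition in_forest :: "nat \<Rightarrow> (nat \<Rightarrow> nat option) \<Rightarrow> bool" where
  "in_forest B nxt \<longleftrightarrow>
     (\<forall>b\<in>{1..B}. \<forall>a. nxt b = Some a \<longrightarrow> a \<in> {1..B}) \<and> acyclic (fedges B nxt)"

definition roots :: "nat \<Rightarrow> (nat \<Rightarrow> nat option) \<Rightarrow> nat set" where
  "roots B nxt = {a \<in> {1..B}. nxt a = None}"

definition admissible ::
  "nat \<Rightarrow> nat \<Rightarrow> (nat \<Rightarrow> nat) \<Rightarrow> (nat \<Rightarrow> nat option) \<Rightarrow> (nat \<Rightarrow> complex)
    \<Rightarrow> (nat \<Rightarrow> complex poly) \<Rightarrow> bool" where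
  "admissible n B nb nxt lam P \<longleftrightarrow>
     1 \<le> n \<and> 1 \<le> B \<and> B \<le> n \<and> (\<forall>a\<in>{1..B}. 1 \<le> nb a) \<and> (\<Sum>a\<in>{1..B}. nb a) = n \<and>
     in_forest B nxt \<and>
     (\<forall>a\<in>{1..B}. degree (P a) \<le> nb a + 1) \<and>
     \<comment> \<open>(i): more than one connected component, i.e. more than one root\<close>
     (card (roots B nxt) > 1 \<longrightarrow> (\<forall>a\<in>roots B nxt. coeff (P a) (nb a + 1) = 0)) \<and>
     \<comment> \<open>(ii)\<close>
     (\<forall>b\<in>{1..B}. \<forall>a. nxt b = Some a \<longrightarrow>
         poly (P a) (lam b) = 0 \<and> coeff (P b) (nb b + 1) = poly (pderiv (P a)) (lam b)) \<and>
     \<comment> \<open>(iii)\<close>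
     (\<forall>b\<in>{1..B}. \<forall>c\<in>{1..B}. \<forall>a. b \<noteq> c \<and> nxt b = Some a \<and> nxt c = Some a \<and> lam b = lam c
         \<longrightarrow> [:- lam b, 1:] ^ 2 dvd P a)"

text \<open>det(t Id - L_a) evaluated, and as a polynomial in t.\<close>
definition detL :: "(nat \<Rightarrow> nat) \<Rightarrow> (nat \<Rightarrow> nat \<Rightarrow> complex) \<Rightarrow> nat \<Rightarrow> complex \<Rightarrow> complex" where
  "detL nb x a t = (\<Prod>j\<in>{1..nb a}. t - x a j)"

definition charL :: "(nat \<Rightarrow> nat) \<Rightarrow> (nat \<Rightarrow> nat \<Rightarrow> complex) \<Rightarrow> nat \<Rightarrow> complex poly" where
  "charL nb x a = (\<Prod>j\<in>{1..nb a}. [:- x a j, 1:])"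

definition fvert :: "nat \<Rightarrow> (nat \<Rightarrow> nat) \<Rightarrow> (nat \<Rightarrow> nat option) \<Rightarrow> (nat \<Rightarrow> complex)
    \<Rightarrow> (nat \<Rightarrow> nat \<Rightarrow> complex) \<Rightarrow> nat \<Rightarrow> complex" where
  "fvert B nb nxt lam x a =
     (\<Prod>s\<in>{s\<in>{1..B}. nxt s \<noteq> None \<and> (prec B nxt s a \<or> s = a)}.
        inverse (detL nb x (the (nxt s)) (lam s)))"

text \<open>Diagonal entry g^{ii} of the contravariant metric at coordinate x a s.\<close>
definition gdiag :: "nat \<Rightarrow> (nat \<Rightarrow> nat) \<Rightarrow> (nat \<Rightarrow> nat option) \<Rightarrow> (nat \<Rightarrow> complex)
    \<Rightarrow> (nat \<Rightarrow> complex poly) \<Rightarrow> (nat \<Rightarrow> nat \<Rightarrow> complex) \<Rightarrow> nat \<Rightarrow> nat \<Rightarrow> complex" where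
  "gdiag B nb nxt lam P x a s =
     fvert B nb nxt lam x a * poly (P a) (x a s) / (\<Prod>j\<in>{1..nb a} - {s}. x a s - x a j)"

definition pred_on_path :: "nat \<Rightarrow> (nat \<Rightarrow> nat option) \<Rightarrow> nat \<Rightarrow> nat \<Rightarrow> nat" where
  "pred_on_path B nxt a b = (THE c. c \<in> {1..B} \<and> nxt c = Some a \<and> (c = b \<or> prec B nxt c b))"

text \<open>Phi^{ab}(t) = (det(t Id - L_a) - det(lam_c Id - L_a)) / (f_a (t - lam_c)), as a polynomial
  (the division is exact).\<close>
definition Phi :: "nat \<Rightarrow> (nat \<Rightarrow> nat) \<Rightarrow> (nat \<Rightarrow> nat option) \<Rightarrow> (nat \<Rightarrow> complex)
    \<Rightarrow> (nat \<Rightarrow> nat \<Rightarrow> complex) \<Rightarrow> nat \<Rightarrow> nat \<Rightarrow> complex poly" where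
  "Phi B nb nxt lam x a b =
     (let c = pred_on_path B nxt a b in
      smult (inverse (fvert B nb nxt lam x a))
        ((charL nb x a - [:detL nb x a (lam c):]) div [:- lam c, 1:]))"

text \<open>Diagonal entry of S^a(t) (as a polynomial in t) at coordinate x b i.\<close>
definition Sdiag :: "nat \<Rightarrow> (nat \<Rightarrow> nat) \<Rightarrow> (nat \<Rightarrow> nat option) \<Rightarrow> (nat \<Rightarrow> complex)
    \<Rightarrow> (nat \<Rightarrow> nat \<Rightarrow> complex) \<Rightarrow> nat \<Rightarrow> nat \<Rightarrow> nat \<Rightarrow> complex poly" where
  "Sdiag B nb nxt lam x a b i =
     (if b = a then smult (inverse (fvert B nb nxt lam x a)) (\<Prod>j\<in>{1..nb a} - {i}. [:- x a j, 1:])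
      else if prec B nxt a b then Phi B nb nxt lam x a b
      else 0)"

definition Kdiag :: "nat \<Rightarrow> (nat \<Rightarrow> nat) \<Rightarrow> (nat \<Rightarrow> nat option) \<Rightarrow> (nat \<Rightarrow> complex)
    \<Rightarrow> (nat \<Rightarrow> complex poly) \<Rightarrow> (nat \<Rightarrow> nat \<Rightarrow> complex) \<Rightarrow> nat \<Rightarrow> nat \<Rightarrow> nat \<Rightarrow> complex poly" where
  "Kdiag B nb nxt lam P x a b i = smult (gdiag B nb nxt lam P x b i) (Sdiag B nb nxt lam x a b i)"

definition integral :: "nat \<Rightarrow> (nat \<Rightarrow> nat) \<Rightarrow> (nat \<Rightarrow> nat option) \<Rightarrow> (nat \<Rightarrow> complex)
    \<Rightarrow> (nat \<Rightarrow> complex poly) \<Rightarrow> (nat \<Rightarrow> nat \<Rightarrow> complex) \<Rightarrow> (nat \<Rightarrow> nat \<Rightarrow> complex)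
    \<Rightarrow> nat \<Rightarrow> nat \<Rightarrow> complex" where
  "integral B nb nxt lam P x p a j =
     (\<Sum>b\<in>{1..B}. \<Sum>i\<in>{1..nb b}. coeff (Kdiag B nb nxt lam P x a b i) (nb a - j) * (p b i)\<^sup>2)"

text \<open>Entry of the matrix S in row x_b^i and column I^a_j.\<close>
definition stackel :: "(nat \<Rightarrow> nat) \<Rightarrow> (nat \<Rightarrow> nat option) \<Rightarrow> (nat \<Rightarrow> complex)
    \<Rightarrow> (nat \<Rightarrow> complex poly) \<Rightarrow> (nat \<Rightarrow> nat \<Rightarrow> complex) \<Rightarrow> nat \<Rightarrow> nat \<Rightarrow> nat \<Rightarrow> nat \<Rightarrow> complex" where
  "stackel nb nxt lam P x b i a j =
     (if b = a then x a i ^ (nb a - j) / poly (P a) (x a i)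
      else if nxt a = Some b then
        (if j = 1 then 1 / (poly (P b) (x b i) * (x b i - lam a)) else 0)
      else 0)"

definition nondegenerate :: "nat \<Rightarrow> (nat \<Rightarrow> nat) \<Rightarrow> (nat \<Rightarrow> nat option) \<Rightarrow> (nat \<Rightarrow> complex)
    \<Rightarrow> (nat \<Rightarrow> complex poly) \<Rightarrow> (nat \<Rightarrow> nat \<Rightarrow> complex) \<Rightarrow> bool" where
  "nondegenerate B nb nxt lam P x \<longleftrightarrow>
     (\<forall>a\<in>{1..B}. \<forall>s\<in>{1..nb a}. \<forall>j\<in>{1..nb a}. s \<noteq> j \<longrightarrow> x a s \<noteq> x a j) \<and>
     (\<forall>a\<in>{1..B}. \<forall>s\<in>{1..nb a}. poly (P a) (x a s) \<noteq> 0) \<and>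
     (\<forall>s\<in>{1..B}. \<forall>a. nxt s = Some a \<longrightarrow> (\<forall>j\<in>{1..nb a}. lam s \<noteq> x a j))"

end

theory Submission
  imports Defs
begin

lemma swap4:
  fixes s f q :: "nat \<Rightarrow> nat \<Rightarrow> complex"
  shows "(\<Sum>a\<in>A. \<Sum>j\<in>J a. s a j * (\<Sum>c\<in>C. \<Sum>k\<in>L c. f' a j c k * q c k))
       = (\<Sum>c\<in>C. \<Sum>k\<in>L c. (\<Sum>a\<in>A. \<Sum>j\<in>J a. s a j * f' a j c k) * q c k)"
proof -
  have "(\<Sum>a\<in>A. \<Sum>j\<in>J a. s a j * (\<Sum>c\<in>C. \<Sum>k\<in>L c. f' a j c k * q c k))
      = (\<Sum>a\<in>A. \<Sum>j\<in>J a. \<Sum>c\<in>C. \<Sum>k\<in>L c. s a j * f' a j c k * q c k)"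
    by (simp add: sum_distrib_left mult.assoc)
  also have "\<dots> = (\<Sum>a\<in>A. \<Sum>c\<in>C. \<Sum>j\<in>J a. \<Sum>k\<in>L c. s a j * f' a j c k * q c k)"
    by (rule sum.cong[OF refl], rule sum.swap)
  also have "\<dots> = (\<Sum>c\<in>C. \<Sum>a\<in>A. \<Sum>j\<in>J a. \<Sum>k\<in>L c. s a j * f' a j c k * q c k)"
    by (rule sum.swap)
  also have "\<dots> = (\<Sum>c\<in>C. \<Sum>a\<in>A. \<Sum>k\<in>L c. \<Sum>j\<in>J a. s a j * f' a j c k * q c k)"
    by (intro sum.cong[OF refl], rule sum.swap)
  also have "\<dots> = (\<Sum>c\<in>C. \<Sum>k\<in>L c. \<Sum>a\<in>A. \<Sum>j\<in>J a. s a j * f' a j c k * q c k)"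
    by (intro sum.cong[OF refl], rule sum.swap)
  also have "\<dots> = (\<Sum>c\<in>C. \<Sum>k\<in>L c. (\<Sum>a\<in>A. \<Sum>j\<in>J a. s a j * f' a j c k) * q c k)"
    by (simp add: sum_distrib_right)
  finally show ?thesis .
qed


lemma monic_prod_lin:
  fixes y :: "nat \<Rightarrow> complex"
  assumes "finite A"
  shows "degree (\<Prod>j\<in>A. [:- y j, 1:]) = card A \<and> coeff (\<Prod>j\<in>A. [:- y j, 1:]) (card A) = 1"
proof -
  have d: "degree (\<Prod>j\<in>A. [:- y j, 1:]) = card A"
    using assms by (subst degree_prod_eq_sum_degree) auto
  have "lead_coeff (\<Prod>j\<in>A. [:- y j, 1:]) = 1" by (simp add: lead_coeff_prod)
  with d show ?thesis by simp
qed

lemma sd_lead: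
  fixes p :: "complex poly"
  assumes "degree p = m" "m \<ge> 1" "coeff p m = 1"
  shows "coeff (synthetic_div p c) (m - 1) = 1"
proof -
  let ?q = "synthetic_div p c"
  have dq: "degree ?q = m - 1" using assms by (simp add: degree_synthetic_div)
  have e: "p = [:-c, 1:] * ?q + [:poly p c:]" using synthetic_div_correct'[of c p] by simp
  have "coeff p m = coeff ([:-c, 1:] * ?q) (degree [:-c, 1:] + degree ?q)"
    using assms dq by (subst e) (simp add: coeff_pCons split: nat.splits)
  also have "\<dots> = coeff ?q (degree ?q)" by (subst coeff_mult_degree_sum) simp
  finally show ?thesis using assms dq by simp
qed

lemma sd_div:
  fixes p :: "complex poly"
  shows "(p - [:poly p c:]) div [:- c, 1:] = synthetic_div p c"
proof -
  have "p - [:poly p c:] = [:-c, 1:] * synthetic_div p c"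
    using synthetic_div_correct'[of c p] by (simp add: algebra_simps)
  then show ?thesis by (simp only:) (rule nonzero_mult_div_cancel_left, simp)
qed

lemma sd_poly:
  fixes p :: "complex poly"
  assumes "t \<noteq> c"
  shows "poly (synthetic_div p c) t = (poly p t - poly p c) / (t - c)"
proof -
  have "poly p t = (t - c) * poly (synthetic_div p c) t + poly p c"
    using arg_cong[OF synthetic_div_correct'[of c p], of "\<lambda>q. poly q t"] by (simp add: algebra_simps)
  with assms show ?thesis by (simp add: field_simps)
qed

lemma poly_charL: "poly (charL nb x a) t = detL nb x a t"
  by (simp add: charL_def detL_def poly_prod)

lemma degree_charL: "degree (charL nb x a) = nb a \<and> coeff (charL nb x a) (nb a) = 1"
  using monic_prod_lin[of "{1..nb a}" "x a"] by (simp add: charL_def)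

lemma sum_coeff_poly:
  fixes q :: "complex poly"
  assumes "degree q < m"
  shows "(\<Sum>j\<in>{1..m}. y ^ (m - j) * coeff q (m - j)) = poly q y"
proof -
  have "(\<Sum>j\<in>{1..m}. y ^ (m - j) * coeff q (m - j)) = (\<Sum>i\<in>{..<m}. y ^ i * coeff q i)"
    by (rule sum.reindex_bij_witness[of _ "\<lambda>i. m - i" "\<lambda>j. m - j"]) auto
  also have "\<dots> = (\<Sum>i\<le>degree q. coeff q i * y ^ i)"
    by (rule sum.mono_neutral_cong_right) (use assms in \<open>auto simp: coeff_eq_0\<close>)
  finally show ?thesis by (simp add: poly_altdef)
qed


locale stk =
  fixes B :: nat and nb :: "nat \<Rightarrow> nat" and nxt :: "nat \<Rightarrow> nat option"
    and lam :: "nat \<Rightarrow> complex" and P :: "nat \<Rightarrow> complex poly"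
    and x :: "nat \<Rightarrow> nat \<Rightarrow> complex"
  assumes forest: "in_forest B nxt"
    and nd: "nondegenerate B nb nxt lam P x"
    and nbpos: "\<forall>a\<in>{1..B}. 1 \<le> nb a"
begin

abbreviation "r \<equiv> fedges B nxt"

lemma r_iff: "(u, v) \<in> r \<longleftrightarrow> u \<in> {1..B} \<and> nxt u = Some v"
  by (simp add: fedges_def)

lemma sv: "single_valued r"
  by (auto simp: single_valued_def fedges_def)

lemma acyc: "acyclic r"
  using forest by (simp add: in_forest_def)

lemma child_prec: "a \<in> {1..B} \<Longrightarrow> nxt a = Some b \<Longrightarrow> prec B nxt b a"
  by (auto simp: prec_def fedges_def)

lemma child_not_prec: "a \<in> {1..B} \<Longrightarrow> nxt a = Some b \<Longrightarrow> \<not> prec B nxt a b"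
proof
  assume a: "a \<in> {1..B}" "nxt a = Some b" "prec B nxt a b"
  then have "(b, a) \<in> r\<^sup>+" "(a, b) \<in> r" by (auto simp: prec_def r_iff)
  then have "(a, a) \<in> r\<^sup>+" by (metis trancl_into_trancl2)
  with acyc show False by (auto simp: acyclic_def)
qed

lemma child_neq: "a \<in> {1..B} \<Longrightarrow> nxt a = Some b \<Longrightarrow> a \<noteq> b"
proof
  assume a: "a \<in> {1..B}" "nxt a = Some b" "a = b"
  then have "(a, a) \<in> r" by (simp add: r_iff)
  then have "(a, a) \<in> r\<^sup>+" by (rule r_into_trancl)
  with acyc show False by (auto simp: acyclic_def)
qed

lemma prec_trans_child:
  "a \<in> {1..B} \<Longrightarrow> nxt a = Some b \<Longrightarrow> a = c \<or> prec B nxt a c \<Longrightarrow> prec B nxt b c"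
proof -
  assume a: "a \<in> {1..B}" "nxt a = Some b" "a = c \<or> prec B nxt a c"
  have e: "(a, b) \<in> r" using a by (simp add: r_iff)
  show "prec B nxt b c" using a(3) unfolding prec_def
  proof
    assume "a = c" then show "(c, b) \<in> r\<^sup>+" using e by (metis r_into_trancl)
  next
    assume "(c, a) \<in> r\<^sup>+" then show "(c, b) \<in> r\<^sup>+" using e by (metis trancl_into_trancl)
  qed
qed

lemma prec_step:
  assumes "prec B nxt b c"
  shows "\<exists>g\<in>{1..B}. nxt g = Some b \<and> (g = c \<or> prec B nxt g c)"
proof -
  have "(c, b) \<in> r\<^sup>+" using assms by (simp add: prec_def)
  then show ?thesis
  proof (cases rule: tranclE)
    case base then have "c \<in> {1..B}" "nxt c = Some b" by (simp_all add: r_iff)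
    then show ?thesis by blast
  next
    case (step y)
    then have "y \<in> {1..B}" "nxt y = Some b" "prec B nxt y c" by (simp_all add: r_iff prec_def)
    then show ?thesis by blast
  qed
qed

lemma child_reach:
  assumes "g \<in> {1..B}" "nxt g = Some b" "(g, s) \<in> r\<^sup>+"
  shows "s = b \<or> (b, s) \<in> r\<^sup>+"
proof -
  have "(g, s) \<in> r \<or> (\<exists>y. (g, y) \<in> r \<and> (y, s) \<in> r\<^sup>+)"
    using assms(3) by (blast elim: converse_tranclE)
  then show ?thesis
  proof
    assume "(g, s) \<in> r" then have "s = b" using assms(2) by (simp add: r_iff)
    then show ?thesis by blast
  next
    assume "\<exists>y. (g, y) \<in> r \<and> (y, s) \<in> r\<^sup>+"
    then obtain y where "(g, y) \<in> r" "(y, s) \<in> r\<^sup>+" by blast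
    then have "y = b" "(y, s) \<in> r\<^sup>+" using assms(2) by (simp_all add: r_iff)
    then show ?thesis by blast
  qed
qed

lemma prec_child_iff:
  assumes "g \<in> {1..B}" "nxt g = Some b"
  shows "prec B nxt s g \<longleftrightarrow> (s = b \<or> prec B nxt s b)"
proof
  assume "prec B nxt s g"
  then have "(g, s) \<in> r\<^sup>+" by (simp add: prec_def)
  from child_reach[OF assms this] show "s = b \<or> prec B nxt s b" by (simp add: prec_def)
next
  assume h: "s = b \<or> prec B nxt s b"
  have e: "(g, b) \<in> r" using assms by (simp add: r_iff)
  show "prec B nxt s g" using h unfolding prec_def
  proof
    assume "s = b" then show "(g, s) \<in> r\<^sup>+" using e by (metis r_into_trancl)
  next
    assume "(b, s) \<in> r\<^sup>+" then show "(g, s) \<in> r\<^sup>+" using e by (metis trancl_into_trancl2)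
  qed
qed

lemma path_unique_aux:
  assumes "g \<in> {1..B}" "nxt g = Some b" "g' \<in> {1..B}" "nxt g' = Some b" "(g, g') \<in> r\<^sup>*"
  shows "g = g'"
proof (rule ccontr)
  assume "g \<noteq> g'"
  with assms(5) have "(g, g') \<in> r\<^sup>+" by (auto dest: rtranclD)
  from child_reach[OF assms(1,2) this] have "g' = b \<or> (b, g') \<in> r\<^sup>+" .
  moreover have "(g', b) \<in> r" using assms by (simp add: r_iff)
  ultimately have "(b, b) \<in> r\<^sup>+" by (metis r_into_trancl trancl_into_trancl)
  with acyc show False by (auto simp: acyclic_def)
qed

lemma path_unique:
  assumes "g \<in> {1..B}" "nxt g = Some b" "g = c \<or> prec B nxt g c"
    "g' \<in> {1..B}" "nxt g' = Some b" "g' = c \<or> prec B nxt g' c"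
  shows "g = g'"
proof -
  have "(c, g) \<in> r\<^sup>*" using assms(3) unfolding prec_def by (metis rtrancl.rtrancl_refl trancl_into_rtrancl)
  moreover have "(c, g') \<in> r\<^sup>*" using assms(6) unfolding prec_def by (metis rtrancl.rtrancl_refl trancl_into_rtrancl)
  ultimately have "(c, g) \<in> r\<^sup>*" "(c, g') \<in> r\<^sup>*" by blast+
  from single_valued_confluent[OF sv this]
  show ?thesis
    by (elim disjE) (use path_unique_aux[OF assms(1,2,4,5)] path_unique_aux[OF assms(4,5,1,2)] in auto)
qed

lemma pred_eq:
  assumes "g \<in> {1..B}" "nxt g = Some b" "g = c \<or> prec B nxt g c"
  shows "pred_on_path B nxt b c = g"
  unfolding pred_on_path_def
proof (rule the_equality)
  show "g \<in> {1..B} \<and> nxt g = Some b \<and> (g = c \<or> prec B nxt g c)"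
    using assms by blast
next
  fix y assume "y \<in> {1..B} \<and> nxt y = Some b \<and> (y = c \<or> prec B nxt y c)"
  then show "y = g" using path_unique[OF assms] by blast
qed

lemma detL_nz: "s \<in> {1..B} \<Longrightarrow> nxt s = Some a \<Longrightarrow> detL nb x a (lam s) \<noteq> 0"
  using nd by (auto simp: nondegenerate_def detL_def)

lemma fvert_nz: "fvert B nb nxt lam x a \<noteq> 0"
  unfolding fvert_def
proof (subst prod_zero_iff)
  show "finite {s \<in> {1..B}. nxt s \<noteq> None \<and> (prec B nxt s a \<or> s = a)}" by simp
  show "\<not> (\<exists>s\<in>{s \<in> {1..B}. nxt s \<noteq> None \<and> (prec B nxt s a \<or> s = a)}.
           inverse (detL nb x (the (nxt s)) (lam s)) = 0)"
  proof
    assume "\<exists>s\<in>{s \<in> {1..B}. nxt s \<noteq> None \<and> (prec B nxt s a \<or> s = a)}.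
           inverse (detL nb x (the (nxt s)) (lam s)) = 0"
    then obtain s where "s \<in> {1..B}" "nxt s \<noteq> None" "detL nb x (the (nxt s)) (lam s) = 0" by auto
    then show False using detL_nz[of s "the (nxt s)"] by auto
  qed
qed

lemma fvert_child:
  assumes "g \<in> {1..B}" "nxt g = Some b"
  shows "fvert B nb nxt lam x g = inverse (detL nb x b (lam g)) * fvert B nb nxt lam x b"
proof -
  let ?S = "{s\<in>{1..B}. nxt s \<noteq> None \<and> (prec B nxt s b \<or> s = b)}"
  have eq: "{s\<in>{1..B}. nxt s \<noteq> None \<and> (prec B nxt s g \<or> s = g)} = insert g ?S"
  proof (rule set_eqI)
    fix s show "s \<in> {s\<in>{1..B}. nxt s \<noteq> None \<and> (prec B nxt s g \<or> s = g)} \<longleftrightarrow> s \<in> insert g ?S"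
      unfolding prec_child_iff[OF assms] using assms by auto
  qed
  have ni: "g \<notin> ?S"
    using assms child_not_prec[OF assms] child_neq[OF assms] by auto
  have fin: "finite ?S" by simp
  show ?thesis unfolding fvert_def eq prod.insert[OF fin ni] using assms by simp
qed

abbreviation "K \<equiv> Kdiag B nb nxt lam P x"
abbreviation "gd \<equiv> gdiag B nb nxt lam P x"
abbreviation "fv \<equiv> fvert B nb nxt lam x"
abbreviation "st \<equiv> stackel nb nxt lam P x"

lemma sd_charL: "(charL nb x a - [:detL nb x a l:]) div [:-l, 1:] = synthetic_div (charL nb x a) l"
  using sd_div[of "charL nb x a" l] by (simp add: poly_charL)

lemma K_lead:
  assumes "a \<in> {1..B}" "c \<in> {1..B}" "k \<in> {1..nb c}"
  shows "coeff (K a c k) (nb a - 1) = (if c = a \<or> prec B nxt a c then gd c k * inverse (fv a) else 0)"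
proof (cases "c = a")
  case True
  have fin: "finite ({1..nb a} - {k})" by simp
  have cd: "card ({1..nb a} - {k}) = nb a - 1" using assms True by simp
  from monic_prod_lin[OF fin, of "x a"] cd
  have "coeff (\<Prod>j\<in>{1..nb a}-{k}. [:-x a j, 1:]) (nb a - 1) = 1" by simp
  then show ?thesis using True by (simp add: Kdiag_def Sdiag_def)
next
  case False
  show ?thesis
  proof (cases "prec B nxt a c")
    case True
    have "coeff (synthetic_div (charL nb x a) l) (nb a - 1) = 1" for l
      using sd_lead degree_charL nbpos assms(1) by auto
    then show ?thesis using False True by (simp add: Kdiag_def Sdiag_def Phi_def Let_def sd_charL)
  next
    case F2: False
    then show ?thesis using False by (simp add: Kdiag_def Sdiag_def)
  qed
qed

lemma K_degree:
  assumes "b \<in> {1..B}" "c \<in> {1..B}" "k \<in> {1..nb c}"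
  shows "degree (K b c k) < nb b"
proof -
  have nbp: "nb b \<ge> 1" using nbpos assms(1) by auto
  have "degree (Sdiag B nb nxt lam x b c k) < nb b"
  proof (cases "c = b")
    case True
    have fin: "finite ({1..nb b} - {k})" by simp
    have cd: "card ({1..nb b} - {k}) = nb b - 1" using assms True by simp
    from monic_prod_lin[OF fin, of "x b"] cd nbp
    have "degree (\<Prod>j\<in>{1..nb b}-{k}. [:-x b j, 1:]) < nb b" by simp
    then show ?thesis using True by (simp add: Sdiag_def)
  next
    case False
    then show ?thesis using nbp degree_charL[of nb x b]
      by (auto simp: Sdiag_def Phi_def Let_def sd_charL degree_synthetic_div)
  qed
  then show ?thesis unfolding Kdiag_def using degree_smult_le le_less_trans by blast
qed

lemma K_poly_self:
  "poly (K b b k) (x b i) = gd b k * inverse (fv b) * (\<Prod>j\<in>{1..nb b}-{k}. x b i - x b j)"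
  by (simp add: Kdiag_def Sdiag_def poly_prod)

lemma K_poly_prec:
  assumes "b \<in> {1..B}" "i \<in> {1..nb b}" "c \<noteq> b" "g \<in> {1..B}" "nxt g = Some b"
    "g = c \<or> prec B nxt g c"
  shows "poly (K b c k) (x b i) = gd c k * inverse (fv b) * (- detL nb x b (lam g) / (x b i - lam g))"
proof -
  have pr: "prec B nxt b c" using prec_trans_child[OF assms(4,5)] assms(6) by auto
  have pe: "pred_on_path B nxt b c = g" by (rule pred_eq[OF assms(4-6)])
  have "\<forall>j\<in>{1..nb b}. lam g \<noteq> x b j" using nd assms(4,5) unfolding nondegenerate_def by blast
  then have ne: "x b i \<noteq> lam g" using assms(2) by metis
  have z: "detL nb x b (x b i) = 0" using assms(2) unfolding detL_def
    by (subst prod_zero_iff) auto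
  show ?thesis using pr pe ne z assms(3)
    by (simp add: Kdiag_def Sdiag_def Phi_def sd_charL sd_poly poly_charL)
qed

lemma K_zero: "c \<noteq> b \<Longrightarrow> \<not> prec B nxt b c \<Longrightarrow> K b c k = 0"
  by (simp add: Kdiag_def Sdiag_def)


lemma T_eq:
  assumes b: "b \<in> {1..B}" and i: "i \<in> {1..nb b}" and c: "c \<in> {1..B}" and k: "k \<in> {1..nb c}"
  shows "(\<Sum>a\<in>{1..B}. \<Sum>j\<in>{1..nb a}. st b i a j * coeff (K a c k) (nb a - j))
         = (if c = b \<and> k = i then 1 else 0)"
proof -
  define Pb where "Pb = poly (P b) (x b i)"
  have Pb0: "Pb \<noteq> 0" using nd b i unfolding nondegenerate_def Pb_def by blast
  define U where "U a = (\<Sum>j\<in>{1..nb a}. st b i a j * coeff (K a c k) (nb a - j))" for a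
  have Ub: "U b = poly (K b c k) (x b i) / Pb"
  proof -
    have "U b = (\<Sum>j\<in>{1..nb b}. x b i ^ (nb b - j) * coeff (K b c k) (nb b - j)) / Pb"
      unfolding U_def sum_divide_distrib by (rule sum.cong) (auto simp: stackel_def Pb_def)
    also have "\<dots> = poly (K b c k) (x b i) / Pb"
      using sum_coeff_poly[OF K_degree[OF b c k]] by simp
    finally show ?thesis .
  qed
  have Ua: "U a = (if nxt a = Some b \<and> (c = a \<or> prec B nxt a c)
                   then gd c k * inverse (fv a) / (Pb * (x b i - lam a)) else 0)"
    if a: "a \<in> {1..B} - {b}" for a
  proof -
    have "U a = (\<Sum>j\<in>{1..nb a}. if j = 1 then (if nxt a = Some b
               then coeff (K a c k) (nb a - 1) / (Pb * (x b i - lam a)) else 0) else 0)"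
      unfolding U_def using a by (intro sum.cong) (auto simp: stackel_def Pb_def)
    also have "\<dots> = (if nxt a = Some b then coeff (K a c k) (nb a - 1) / (Pb * (x b i - lam a)) else 0)"
      using nbpos a by simp
    also have "\<dots> = (if nxt a = Some b \<and> (c = a \<or> prec B nxt a c)
                   then gd c k * inverse (fv a) / (Pb * (x b i - lam a)) else 0)"
      using K_lead[of a c k] a c k by auto
    finally show ?thesis .
  qed
  have split: "(\<Sum>a\<in>{1..B}. U a) = U b + (\<Sum>a\<in>{1..B}-{b}. U a)"
    by (rule sum.remove) (use b in auto)
  have main: "U b + (\<Sum>a\<in>{1..B}-{b}. U a) = (if c = b \<and> k = i then 1 else 0)"
  proof (cases "c = b")
    case True
    have "(\<Sum>a\<in>{1..B}-{b}. U a) = 0"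
    proof (rule sum.neutral, rule ballI)
      fix a assume a: "a \<in> {1..B} - {b}"
      have nc: "\<not> (nxt a = Some b \<and> (c = a \<or> prec B nxt a c))"
        using True a child_not_prec[of a b] by auto
      show "U a = 0" unfolding Ua[OF a] by (rule if_not_P[OF nc])
    qed
    moreover have "U b = (if k = i then 1 else 0)"
    proof (cases "k = i")
      case True
      have pz: "(\<Prod>j\<in>{1..nb b}-{i}. x b i - x b j) \<noteq> 0"
        using nd b i unfolding nondegenerate_def by (subst prod_zero_iff) auto
      have "gd b i = fv b * Pb / (\<Prod>j\<in>{1..nb b}-{i}. x b i - x b j)"
        by (simp add: gdiag_def Pb_def)
      then show ?thesis using True \<open>c = b\<close> Ub K_poly_self pz Pb0 fvert_nz by (simp add: field_simps)
    next
      case False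
      have "(\<Prod>j\<in>{1..nb b}-{k}. x b i - x b j) = 0"
        using i False by (subst prod_zero_iff) auto
      then show ?thesis using False \<open>c = b\<close> Ub K_poly_self by simp
    qed
    ultimately show ?thesis using True by simp
  next
    case cb: False
    show ?thesis
    proof (cases "prec B nxt b c")
      case True
      obtain g where g: "g \<in> {1..B}" "nxt g = Some b" "g = c \<or> prec B nxt g c"
        using prec_step[OF True] by blast
      have gb: "g \<in> {1..B} - {b}" using g child_neq by auto
      have "(\<Sum>a\<in>{1..B}-{b}. U a) = (\<Sum>a\<in>{1..B}-{b}. if a = g then
              gd c k * inverse (fv g) / (Pb * (x b i - lam g)) else 0)"
      proof (rule sum.cong[OF refl])
        fix a assume a: "a \<in> {1..B} - {b}"
        have iff: "(nxt a = Some b \<and> (c = a \<or> prec B nxt a c)) \<longleftrightarrow> a = g"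
        proof
          assume h: "nxt a = Some b \<and> (c = a \<or> prec B nxt a c)"
          have a1: "a \<in> {1..B}" using a by blast
          have a2: "nxt a = Some b" using h by blast
          have a3: "a = c \<or> prec B nxt a c" using h by blast
          show "a = g" using path_unique[OF g a1 a2 a3] by (rule sym)
        next
          assume "a = g"
          then show "nxt a = Some b \<and> (c = a \<or> prec B nxt a c)" using g by blast
        qed
        show "U a = (if a = g then gd c k * inverse (fv g) / (Pb * (x b i - lam g)) else 0)"
        proof (cases "a = g")
          case True
          then have "nxt a = Some b \<and> (c = a \<or> prec B nxt a c)" using iff by blast
          then have "U a = gd c k * inverse (fv a) / (Pb * (x b i - lam a))"
            unfolding Ua[OF a] by (rule if_P)
          then show ?thesis using True by simp
        next
          case False
          then have "\<not> (nxt a = Some b \<and> (c = a \<or> prec B nxt a c))" using iff by blast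
          then have "U a = 0" unfolding Ua[OF a] by (rule if_not_P)
          then show ?thesis using False by (simp only: if_False)
        qed
      qed
      also have "\<dots> = gd c k * inverse (fv g) / (Pb * (x b i - lam g))"
        using gb by simp
      finally have s: "(\<Sum>a\<in>{1..B}-{b}. U a) = gd c k * inverse (fv g) / (Pb * (x b i - lam g))" .
      have "\<forall>j\<in>{1..nb b}. lam g \<noteq> x b j" using nd g unfolding nondegenerate_def by blast
      then have "lam g \<noteq> x b i" using i by blast
      then have ne: "x b i - lam g \<noteq> 0" by simp
      have D: "detL nb x b (lam g) \<noteq> 0" using detL_nz g by blast
      have fg: "fv g = inverse (detL nb x b (lam g)) * fv b" by (rule fvert_child[OF g(1,2)])
      define Dg where "Dg = detL nb x b (lam g)"
      define e where "e = x b i - lam g"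
      define fb where "fb = fv b"
      define G where "G = gd c k"
      have fb0: "fb \<noteq> 0" unfolding fb_def by (rule fvert_nz)
      have ub: "U b = G * inverse fb * (- Dg / e) / Pb"
        unfolding Ub K_poly_prec[OF b i cb g] Dg_def e_def fb_def G_def ..
      have sg: "inverse (fv g) = Dg * inverse fb"
        unfolding fg Dg_def fb_def by (simp add: inverse_mult_distrib)
      have s2: "(\<Sum>a\<in>{1..B}-{b}. U a) = G * (Dg * inverse fb) / (Pb * e)"
        unfolding s sg G_def e_def ..
      have "U b + (\<Sum>a\<in>{1..B}-{b}. U a) = 0"
        unfolding ub s2 using fb0 Pb0 ne unfolding e_def[symmetric]
        by (simp add: field_simps)
      then show ?thesis using cb by simp
    next
      case False
      have "(\<Sum>a\<in>{1..B}-{b}. U a) = 0"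
      proof (rule sum.neutral, rule ballI)
        fix a assume a: "a \<in> {1..B} - {b}"
        have nc: "\<not> (nxt a = Some b \<and> (c = a \<or> prec B nxt a c))"
          using False a prec_trans_child[of a b c] by auto
        show "U a = 0" unfolding Ua[OF a] by (rule if_not_P[OF nc])
      qed
      then show ?thesis using Ub K_zero[OF cb False] cb by simp
    qed
  qed
  show ?thesis using split main unfolding U_def by simp
qed

end

theorem theorem1p4:
  fixes n B :: nat and nb :: "nat \<Rightarrow> nat" and nxt :: "nat \<Rightarrow> nat option"
    and lam :: "nat \<Rightarrow> complex" and P :: "nat \<Rightarrow> complex poly"
    and x p :: "nat \<Rightarrow> nat \<Rightarrow> complex"
  assumes "admissible n B nb nxt lam P"
    and "nondegenerate B nb nxt lam P x"
    and "b \<in> {1..B}" and "i \<in> {1..nb b}"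
  shows "(\<Sum>a\<in>{1..B}. \<Sum>j\<in>{1..nb a}.
            stackel nb nxt lam P x b i a j * integral B nb nxt lam P x p a j) = (p b i)\<^sup>2"
proof -
  from assms(1) have forest: "in_forest B nxt" and nbp: "\<forall>a\<in>{1..B}. 1 \<le> nb a"
    by (auto simp: admissible_def)
  interpret S: stk B nb nxt lam P x using forest assms(2) nbp by unfold_locales
  have "(\<Sum>a\<in>{1..B}. \<Sum>j\<in>{1..nb a}.
            stackel nb nxt lam P x b i a j * integral B nb nxt lam P x p a j)
      = (\<Sum>c\<in>{1..B}. \<Sum>k\<in>{1..nb c}. (\<Sum>a\<in>{1..B}. \<Sum>j\<in>{1..nb a}.
            stackel nb nxt lam P x b i a j * coeff (Kdiag B nb nxt lam P x a c k) (nb a - j)) * (p c k)\<^sup>2)"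
    unfolding integral_def by (rule swap4)
  also have "\<dots> = (\<Sum>c\<in>{1..B}. \<Sum>k\<in>{1..nb c}. if c = b \<and> k = i then (p c k)\<^sup>2 else 0)"
  proof (intro sum.cong refl)
    fix c k assume ck: "c \<in> {1..B}" "k \<in> {1..nb c}"
    show "(\<Sum>a\<in>{1..B}. \<Sum>j\<in>{1..nb a}.
            stackel nb nxt lam P x b i a j * coeff (Kdiag B nb nxt lam P x a c k) (nb a - j)) * (p c k)\<^sup>2
          = (if c = b \<and> k = i then (p c k)\<^sup>2 else 0)"
      using S.T_eq[OF assms(3,4) ck] by simp
  qed
  also have "\<dots> = (\<Sum>c\<in>{1..B}. if c = b then (p b i)\<^sup>2 else 0)"
    by (intro sum.cong refl) (use assms(4) in auto)
  also have "\<dots> = (p b i)\<^sup>2" using assms(3) by simp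
  finally show ?thesis .
qed

end
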